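(* Let $M\in\mathrm{SL}(3,\mathbb R)$, $\mathcal D=\mathbb S_1^1$, $K=\mathcal G_{\mathcal D}(M)$, and let $(u_1,\vec v_1),\dots,(u_K,\vec v_K)\in\mathcal Q_{\mathcal D}(M)$ satisfy (V1)–(V3) and $u_i\ge0$ for all $i$. Then for all $1\le i<j\le K-1$ we have $|\vec v_i-\vec v_j|>|\vec v_j|$, and for all $1\le i<j<k\le K-1$ we have $|\vec v_i-\vec v_j-\vec v_k|\ge|\vec v_k|$.
   Context: Row vectors in $\mathbb R^3$ are written $(u,\vec v)$, $u\in\mathbb R$, $\vec v\in\mathbb R^2$; $\mathbb Z^3M=\{\vec mM:\vec m\in\mathbb Z^3\}$. For $\mathcal D\subseteq\mathbb S_1^1$ (unit circle): $\mathcal Q_{\mathcal D}(M,t)=\{(u,\vec v)\in\mathbb Z^3M:-t<u<1-t,\ \vec v\in\mathbb R_{>0}\mathcal D\}$ for $t\in(0,1)$; $\mathcal Q_{\mathcal D}(M)=\{(u,\vec v)\in\mathbb Z^3M:|u|<1,\ \vec v\in\mathbb R_{>0}\mathcal D\}$; $F_{\mathcal D}(M,t)=\min\{|\vec v|:(u,\vec v)\in\mathcal Q_{\mathcal D}(M,t)\}$; $\mathcal F_{\mathcal D}(M)=\{F_{\mathcal D}(M,t):0<t<1\}$ and $\mathcal G_{\mathcal D}(M)=|\mathcal F_{\mathcal D}(M)|$. Conditions: (V1) $0<|\vec v_1|<\cdots<|\vec v_K|$; (V2) each $\delta\in\mathcal F_{\mathcal D}(M)$ equals $|\vec v_i|$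 for some $i$; (V3) for each $i$ there is $t\in(0,1)$ with $(u_i,\vec v_i)\in\mathcal Q_{\mathcal D}(M,t)$ and $|\vec v_i|=F_{\mathcal D}(M,t)$. (For $\mathcal D=\mathbb S_1^1$, replacing $(u_i,\vec v_i)$ by its negative, one may always arrange $u_i\ge0$.) *)

theory Defs
  imports "HOL-Analysis.Analysis"
begin

definition split3 :: "real^3 \<Rightarrow> real \<times> (real^2)" where
  "split3 y = (y$1, vector [y$2, y$3])"

definition latt :: "real^3^3 \<Rightarrow> (real \<times> (real^2)) set" where
  "latt M = {split3 (m v* M) | m. \<forall>i. m$i \<in> \<int>}"

definition pos_cone :: "(real^2) set \<Rightarrow> (real^2) set" where
  "pos_cone D = {c *\<^sub>R d | c d. c > 0 \<and> d \<in> D}"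

definition Qt :: "(real^2) set \<Rightarrow> real^3^3 \<Rightarrow> real \<Rightarrow> (real \<times> (real^2)) set" where
  "Qt D M t = {(u, v) \<in> latt M. - t < u \<and> u < 1 - t \<and> v \<in> pos_cone D}"

definition QQ :: "(real^2) set \<Rightarrow> real^3^3 \<Rightarrow> (real \<times> (real^2)) set" where
  "QQ D M = {(u, v) \<in> latt M. \<bar>u\<bar> < 1 \<and> v \<in> pos_cone D}"

text \<open>F_D(M,t): the minimum of |v| over Q_D(M,t) (the minimum is attained).\<close>
definition FF :: "(real^2) set \<Rightarrow> real^3^3 \<Rightarrow> real \<Rightarrow> real" where
  "FF D M t = Inf {norm v | u v. (u, v) \<in> Qt D M t}"

definition FFset :: "(real^2) set \<Rightarrow> real^3^3 \<Rightarrow> real set" where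
  "FFset D M = {FF D M t | t. 0 < t \<and> t < 1}"

definition GG :: "(real^2) set \<Rightarrow> real^3^3 \<Rightarrow> nat" where
  "GG D M = card (FFset D M)"

end

theory Submission
  imports Defs
begin

lemma vm_diff: "((m::real^3) - m') v* (M::real^3^3) = m v* M - m' v* M"
  by (simp add: vec_eq_iff vector_matrix_mult_def left_diff_distrib sum_subtractf)

lemma split3_diff: "split3 (x - y) = (fst (split3 x) - fst (split3 y), snd (split3 x) - snd (split3 y))"
  unfolding split3_def by (simp add: vec_eq_iff forall_3 forall_2 vector_def)

lemma latt_diff:
  assumes "(a, b) \<in> latt M" "(c, d) \<in> latt M"
  shows "(a - c, b - d) \<in> latt M"
proof -
  obtain m where m: "(a,b) = split3 (m v* M)" "\<forall>i. m$i \<in> \<int>" using assms(1) unfolding latt_def by blast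
  obtain m' where m': "(c,d) = split3 (m' v* M)" "\<forall>i. m'$i \<in> \<int>" using assms(2) unfolding latt_def by blast
  have "(a - c, b - d) = split3 ((m - m') v* M)"
    using m(1) m'(1) by (simp add: vm_diff split3_diff prod_eq_iff)
  moreover have "\<forall>i. (m - m')$i \<in> \<int>" using m(2) m'(2) by simp
  ultimately show ?thesis unfolding latt_def by blast
qed

lemma pos_cone_sphere: "(v::real^2) \<noteq> 0 \<Longrightarrow> v \<in> pos_cone (sphere 0 1)"
  unfolding pos_cone_def
  apply (rule CollectI)
  apply (rule exI[of _ "norm v"], rule exI[of _ "v /\<^sub>R norm v"])
  by simp

lemma FF_le:
  assumes "(x, y) \<in> latt M" "y \<noteq> 0" "- t < x" "x < 1 - t"
  shows "FF (sphere 0 1) M t \<le> norm y"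
proof -
  have "(x, y) \<in> Qt (sphere 0 1) M t" using assms pos_cone_sphere unfolding Qt_def by blast
  then show ?thesis unfolding FF_def
    by (intro cInf_lower) (auto intro!: bdd_belowI[of _ 0])
qed

theorem proposition5p2:
  fixes M :: "real^3^3" and K :: nat and u :: "nat \<Rightarrow> real" and v :: "nat \<Rightarrow> real^2"
  defines "D \<equiv> sphere (0::real^2) 1"
  assumes SL: "det M = 1"
    and K: "K = GG D M"
    and inQ: "\<forall>i\<in>{1..K}. (u i, v i) \<in> QQ D M"
    and V1: "\<forall>i\<in>{1..K}. 0 < norm (v i)"
    and V1': "\<forall>i j. 1 \<le> i \<and> i < j \<and> j \<le> K \<longrightarrow> norm (v i) < norm (v j)"
    and V2: "\<forall>\<delta>\<in>FFset D M. \<exists>i\<in>{1..K}. \<delta> = norm (v i)"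
    and V3: "\<forall>i\<in>{1..K}. \<exists>t. 0 < t \<and> t < 1 \<and> (u i, v i) \<in> Qt D M t \<and> norm (v i) = FF D M t"
    and upos: "\<forall>i\<in>{1..K}. 0 \<le> u i"
  shows "(\<forall>i j. 1 \<le> i \<and> i < j \<and> j \<le> K - 1 \<longrightarrow> norm (v i - v j) > norm (v j))
       \<and> (\<forall>i j k. 1 \<le> i \<and> i < j \<and> j < k \<and> k \<le> K - 1 \<longrightarrow> norm (v i - v j - v k) \<ge> norm (v k))"
proof (cases "K \<ge> 2")
  case False
  then show ?thesis by auto
next
  case K2: True
  obtain T where T: "\<forall>i\<in>{1..K}. 0 < T i \<and> T i < 1 \<and> (u i, v i) \<in> Qt D M (T i) \<and> norm (v i) = FF D M (T i)"
    using bchoice[OF V3] by blast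
  have lat: "(u i, v i) \<in> latt M" and ub: "\<bar>u i\<bar> < 1" and un: "0 \<le> u i" and vn: "v i \<noteq> 0"
    and Tb: "0 < T i" "T i < 1" "- T i < u i" "u i < 1 - T i" and vF: "norm (v i) = FF D M (T i)"
    if "i \<in> {1..K}" for i
    using inQ T that upos unfolding QQ_def Qt_def apply auto
    using V1 that by fastforce
  have FFl: "FF D M t \<le> norm y" if "(x, y) \<in> latt M" "y \<noteq> 0" "- t < x" "x < 1 - t" for x y t
    using FF_le[OF that] unfolding D_def .
  have KK: "K \<in> {1..K}" using K2 by auto
  have A: "norm (v K) \<le> norm y" if "(x, y) \<in> latt M" "y \<noteq> 0" "\<bar>x\<bar> < 1/2" for x y
  proof -
    have z: "(0, 0) \<in> latt M" using latt_diff[OF lat[OF KK] lat[OF KK]] by simp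
    have n: "(- x, - y) \<in> latt M" using latt_diff[OF z that(1)] by simp
    show ?thesis
    proof (cases "- T K < x \<and> x < 1 - T K")
      case True
      then show ?thesis using FFl[OF that(1,2)] vF[OF KK] by auto
    next
      case False
      then have "- T K < - x \<and> - x < 1 - T K" using that(3) Tb[OF KK] by auto
      then show ?thesis using FFl[OF n] that(2) vF[OF KK] by auto
    qed
  qed
  have B: "u i \<ge> 1/2" if "1 \<le> i" "i \<le> K - 1" for i
  proof (rule ccontr)
    assume "\<not> ?thesis"
    then have "norm (v K) \<le> norm (v i)" using A[OF lat vn] un that by auto
    moreover have "norm (v i) < norm (v K)" using V1' that K2 by auto
    ultimately show False by simp
  qed
  have P1: "norm (v i - v j) > norm (v j)" if "1 \<le> i" "i < j" "j \<le> K - 1" for i j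
  proof -
    have i: "i \<in> {1..K}" and j: "j \<in> {1..K}" using that by auto
    have "norm (v i) < norm (v j)" using V1' that by auto
    then have "v i - v j \<noteq> 0" by auto
    moreover have "\<bar>u i - u j\<bar> < 1/2" proof -
      have "1/2 \<le> u i" "1/2 \<le> u j" using B[of i] B[of j] that by auto
      moreover have "u i < 1" "u j < 1" using ub[OF i] ub[OF j] by auto
      ultimately show ?thesis by arith
    qed
    ultimately have "norm (v K) \<le> norm (v i - v j)" using A[OF latt_diff[OF lat[OF i] lat[OF j]]] by auto
    moreover have "norm (v j) < norm (v K)" using V1' that by auto
    ultimately show ?thesis by simp
  qed
  have P2: "norm (v i - v j - v k) \<ge> norm (v k)" if "1 \<le> i" "i < j" "j < k" "k \<le> K - 1" for i j k
  proof -
    have i: "i \<in> {1..K}" and j: "j \<in> {1..K}" and k: "k \<in> {1..K}" using that by auto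
    have lij: "(u i - u j, v i - v j) \<in> latt M" using latt_diff[OF lat[OF i] lat[OF j]] .
    have "norm (v i) < norm (v j)" using V1' that by auto
    then have "\<not> (- T j < u i \<and> u i < 1 - T j)" using FFl[OF lat[OF i] vn[OF i], of "T j"] vF[OF j] by force
    then have uij: "u j < u i" using Tb[OF j] un[OF i] by auto
    have ij: "\<bar>u i - u j\<bar> < 1/2" proof -
      have "1/2 \<le> u i" "1/2 \<le> u j" using B[of i] B[of j] that by auto
      moreover have "u i < 1" "u j < 1" using ub[OF i] ub[OF j] by auto
      ultimately show ?thesis by arith
    qed
    show ?thesis
    proof (cases "v k - (v i - v j) = 0")
      case True
      then have "norm (v K) \<le> norm (v k)" using A[OF lij _ ij] vn[OF k] by auto
      moreover have "norm (v k) < norm (v K)" using V1' that by auto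
      ultimately show ?thesis by simp
    next
      case False
      have "- T k < u k - (u i - u j) \<and> u k - (u i - u j) < 1 - T k"
        using uij Tb[OF k] B[of j] B[of k] ub[OF i] that by auto
      then have "FF D M (T k) \<le> norm (v k - (v i - v j))"
        using FFl[OF latt_diff[OF lat[OF k] lij] False] by auto
      moreover have "norm (v k - (v i - v j)) = norm (v i - v j - v k)"
        by (metis minus_diff_eq norm_minus_cancel)
      ultimately show ?thesis using vF[OF k] by simp
    qed
  qed
  show ?thesis using P1 P2 by blast
qed

end
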